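(* Fix a $C^0$-concept over $\mathbb{K}$. Let $E,F\in\mathcal{M}$, $U\subseteq E$ open, $f\colon U\to F$ of class $C^1$ and $x\in U$. Then $df(x)\colon E\to F$ is a $\mathbb{K}$-linear $C^0$-map.
   Context: Let $\mathbb{K}$ be a commutative ring with unit carrying a topology. A $C^0$-concept over $\mathbb{K}$ consists of: (a) a class $\mathcal{M}$ of topologized $\mathbb{K}$-modules with $\mathbb{K}\in\mathcal{M}$; (b) for $E,F\in\mathcal{M}$ and open $U\subseteq E$, a set $C^0(U,F)$ of continuous maps; (c) for $E_1,E_2\in\mathcal{M}$ a topology on $E_1\times E_2$ (not necessarily the product topology) making it a member of $\mathcal{M}$; subject to: (I.1) composites of $C^0$-maps are $C^0$, identities and inclusions of open subsets are $C^0$; (I.2) $x\mapsto rx+b$ is $C^0$; (I.3) $t\mapsto tv+x$ is $C^0$; (I.4) $\mathbb{K}^\times$ is open and inversion is $C^0$; (I.5) $C^0$ is local on open covers; (II.1) projections and $v\mapsto(v,y)$, $w\mapsto(x,w)$ are $C^0$; (II.2) $f_1\times f_2$ is $C^0$ for $C^0$-maps $f_i$; (II.3) diagonals are $C^0$; (II.4) exchange/associativity maps of products are $C^0$ both ways; (II.5) addition and scalar multiplication are $C^0$; (III) a $C^0$-map on open $U\subseteq\mathbb{K}$ is determined by its values on $U\cap\mathbb{K}^\times$. For open $U\subseteq E$, $U^{[1]}=\{(x,v,t)\in U\times E\times\mathbb{K}:x+tv\in U\}$; a $C^0$-map $f$ is $C^1$ if there is a $C^0$-map $f^{[1]}\colon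 U^{[1]}\to F$ with $f(x+tv)-f(x)=t\,f^{[1]}(x,v,t)$ for all $(x,v,t)\in U^{[1]}$ (unique), and $df(x)v:=f^{[1]}(x,v,0)$. *)

theory Defs
  imports "HOL-Analysis.Analysis"
begin

text \<open>The ring K is the type 'k (a commutative ring with unit) together with an
arbitrary topology TK on it. All modules of the class M live inside one universe type 'a:
a topologized module is a carrier set with operations and a topology on the carrier.\<close>

record ('k, 'a) tmod =
  mcarrier :: "'a set"
  madd :: "'a \<Rightarrow> 'a \<Rightarrow> 'a"
  mzero :: 'a
  msmul :: "'k \<Rightarrow> 'a \<Rightarrow> 'a"
  mtop :: "'a topology"

definition tmodule :: "('k::comm_ring_1, 'a) tmod \<Rightarrow> bool" where
  "tmodule E \<longleftrightarrow>
     mzero E \<in> mcarrier E \<and>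
     (\<forall>x\<in>mcarrier E. \<forall>y\<in>mcarrier E. madd E x y \<in> mcarrier E) \<and>
     (\<forall>r. \<forall>x\<in>mcarrier E. msmul E r x \<in> mcarrier E) \<and>
     (\<forall>x\<in>mcarrier E. \<forall>y\<in>mcarrier E. \<forall>z\<in>mcarrier E.
         madd E (madd E x y) z = madd E x (madd E y z)) \<and>
     (\<forall>x\<in>mcarrier E. \<forall>y\<in>mcarrier E. madd E x y = madd E y x) \<and>
     (\<forall>x\<in>mcarrier E. madd E (mzero E) x = x) \<and>
     (\<forall>x\<in>mcarrier E. madd E x (msmul E (-1) x) = mzero E) \<and>
     (\<forall>x\<in>mcarrier E. msmul E 1 x = x) \<and>
     (\<forall>r s. \<forall>x\<in>mcarrier E. msmul E (r * s) x = msmul E r (msmul E s x)) \<and>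
     (\<forall>r s. \<forall>x\<in>mcarrier E. msmul E (r + s) x = madd E (msmul E r x) (msmul E s x)) \<and>
     (\<forall>r. \<forall>x\<in>mcarrier E. \<forall>y\<in>mcarrier E.
         msmul E r (madd E x y) = madd E (msmul E r x) (msmul E r y)) \<and>
     topspace (mtop E) = mcarrier E"

definition msub :: "('k::comm_ring_1, 'a) tmod \<Rightarrow> 'a \<Rightarrow> 'a \<Rightarrow> 'a" where
  "msub E x y = madd E x (msmul E (-1) y)"

definition kunits :: "'k::comm_ring_1 set" where
  "kunits = {r. \<exists>s. r * s = 1}"

definition kinverse :: "'k::comm_ring_1 \<Rightarrow> 'k" where
  "kinverse r = (THE s. r * s = 1)"

text \<open>
  cM: the class M;  cC0 E U F f: "f is in C^0(U,F)" for U open in E (a predicate on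
  functions of the universe; only values on U matter);  cK: the module K viewed as member
  of M, with the identification cemb : 'k -> carrier cK;  cprod E1 E2: the module
  E1 x E2 (with the topology chosen by the concept), with cpair E1 E2 x y the element
  corresponding to the pair (x,y).\<close>

record ('k, 'a) c0data =
  cM :: "('k, 'a) tmod set"
  cC0 :: "('k, 'a) tmod \<Rightarrow> 'a set \<Rightarrow> ('k, 'a) tmod \<Rightarrow> ('a \<Rightarrow> 'a) \<Rightarrow> bool"
  cK :: "('k, 'a) tmod"
  cemb :: "'k \<Rightarrow> 'a"
  cprod :: "('k, 'a) tmod \<Rightarrow> ('k, 'a) tmod \<Rightarrow> ('k, 'a) tmod"
  cpair :: "('k, 'a) tmod \<Rightarrow> ('k, 'a) tmod \<Rightarrow> 'a \<Rightarrow> 'a \<Rightarrow> 'a"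

definition kof :: "('k, 'a) c0data \<Rightarrow> 'a \<Rightarrow> 'k" where
  "kof C a = inv_into UNIV (cemb C) a"

definition pfst :: "('k, 'a) c0data \<Rightarrow> ('k, 'a) tmod \<Rightarrow> ('k, 'a) tmod \<Rightarrow> 'a \<Rightarrow> 'a" where
  "pfst C E1 E2 z = (THE x. x \<in> mcarrier E1 \<and> (\<exists>y\<in>mcarrier E2. z = cpair C E1 E2 x y))"

definition psnd :: "('k, 'a) c0data \<Rightarrow> ('k, 'a) tmod \<Rightarrow> ('k, 'a) tmod \<Rightarrow> 'a \<Rightarrow> 'a" where
  "psnd C E1 E2 z = (THE y. y \<in> mcarrier E2 \<and> (\<exists>x\<in>mcarrier E1. z = cpair C E1 E2 x y))"

definition c0_structure :: "'k::comm_ring_1 topology \<Rightarrow> ('k, 'a) c0data \<Rightarrow> bool" where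
  "c0_structure TK C \<longleftrightarrow>
     topspace TK = UNIV \<and>
     (\<forall>E\<in>cM C. tmodule E) \<and>
     \<comment> \<open>K is a member of M\<close>
     cK C \<in> cM C \<and>
     bij_betw (cemb C) UNIV (mcarrier (cK C)) \<and>
     (\<forall>r s. cemb C (r + s) = madd (cK C) (cemb C r) (cemb C s)) \<and>
     cemb C 0 = mzero (cK C) \<and>
     (\<forall>r s. msmul (cK C) r (cemb C s) = cemb C (r * s)) \<and>
     homeomorphic_map TK (mtop (cK C)) (cemb C) \<and>
     \<comment> \<open>products: E1 x E2 with module structure of the product, some topology\<close>
     (\<forall>E1\<in>cM C. \<forall>E2\<in>cM C.
        cprod C E1 E2 \<in> cM C \<and>
        bij_betw (\<lambda>(x, y). cpair C E1 E2 x y) (mcarrier E1 \<times> mcarrier E2)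
                 (mcarrier (cprod C E1 E2)) \<and>
        mzero (cprod C E1 E2) = cpair C E1 E2 (mzero E1) (mzero E2) \<and>
        (\<forall>x\<in>mcarrier E1. \<forall>y\<in>mcarrier E2. \<forall>x'\<in>mcarrier E1. \<forall>y'\<in>mcarrier E2.
           madd (cprod C E1 E2) (cpair C E1 E2 x y) (cpair C E1 E2 x' y')
             = cpair C E1 E2 (madd E1 x x') (madd E2 y y')) \<and>
        (\<forall>r. \<forall>x\<in>mcarrier E1. \<forall>y\<in>mcarrier E2.
           msmul (cprod C E1 E2) r (cpair C E1 E2 x y)
             = cpair C E1 E2 (msmul E1 r x) (msmul E2 r y)))"

definition c0_maps_ax :: "('k::comm_ring_1, 'a) c0data \<Rightarrow> bool" where
  "c0_maps_ax C \<longleftrightarrow>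
     (\<forall>E\<in>cM C. \<forall>F\<in>cM C. \<forall>U f. cC0 C E U F f \<longrightarrow>
        openin (mtop E) U \<and> f ` U \<subseteq> mcarrier F \<and>
        continuous_map (subtopology (mtop E) U) (mtop F) f) \<and>
     (\<forall>E\<in>cM C. \<forall>F\<in>cM C. \<forall>U f g. cC0 C E U F f \<and> (\<forall>x\<in>U. f x = g x) \<longrightarrow> cC0 C E U F g)"

definition ax_I :: "'k::comm_ring_1 topology \<Rightarrow> ('k, 'a) c0data \<Rightarrow> bool" where
  "ax_I TK C \<longleftrightarrow>
     \<comment> \<open>(I.1)\<close>
     (\<forall>E\<in>cM C. \<forall>F\<in>cM C. \<forall>G\<in>cM C. \<forall>U V f g.
        cC0 C E U F f \<and> cC0 C F V G g \<and> f ` U \<subseteq> V \<longrightarrow> cC0 C E U G (g \<circ> f)) \<and>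
     (\<forall>E\<in>cM C. \<forall>U. openin (mtop E) U \<longrightarrow> cC0 C E U E id) \<and>
     (\<forall>E\<in>cM C. \<forall>F\<in>cM C. \<forall>U V f.
        cC0 C E U F f \<and> openin (mtop E) V \<and> V \<subseteq> U \<longrightarrow> cC0 C E V F f) \<and>
     \<comment> \<open>(I.2)\<close>
     (\<forall>E\<in>cM C. \<forall>r. \<forall>b\<in>mcarrier E.
        cC0 C E (mcarrier E) E (\<lambda>x. madd E (msmul E r x) b)) \<and>
     \<comment> \<open>(I.3)\<close>
     (\<forall>E\<in>cM C. \<forall>v\<in>mcarrier E. \<forall>x\<in>mcarrier E.
        cC0 C (cK C) (mcarrier (cK C)) E (\<lambda>t. madd E (msmul E (kof C t) v) x)) \<and>
     \<comment> \<open>(I.4)\<close>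
     openin TK kunits \<and>
     cC0 C (cK C) (cemb C ` kunits) (cK C) (\<lambda>a. cemb C (kinverse (kof C a))) \<and>
     \<comment> \<open>(I.5)\<close>
     (\<forall>E\<in>cM C. \<forall>F\<in>cM C. \<forall>U f \<U>.
        (\<forall>V\<in>\<U>. cC0 C E V F f) \<and> \<Union>\<U> = U \<longrightarrow> cC0 C E U F f)"

definition ax_II :: "('k::comm_ring_1, 'a) c0data \<Rightarrow> bool" where
  "ax_II C \<longleftrightarrow>
     \<comment> \<open>(II.1)\<close>
     (\<forall>E1\<in>cM C. \<forall>E2\<in>cM C.
        cC0 C (cprod C E1 E2) (mcarrier (cprod C E1 E2)) E1 (pfst C E1 E2) \<and>
        cC0 C (cprod C E1 E2) (mcarrier (cprod C E1 E2)) E2 (psnd C E1 E2) \<and>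
        (\<forall>y\<in>mcarrier E2. cC0 C E1 (mcarrier E1) (cprod C E1 E2) (\<lambda>v. cpair C E1 E2 v y)) \<and>
        (\<forall>x\<in>mcarrier E1. cC0 C E2 (mcarrier E2) (cprod C E1 E2) (\<lambda>w. cpair C E1 E2 x w))) \<and>
     \<comment> \<open>(II.2)\<close>
     (\<forall>E1\<in>cM C. \<forall>E2\<in>cM C. \<forall>F1\<in>cM C. \<forall>F2\<in>cM C. \<forall>U1 U2 f1 f2.
        cC0 C E1 U1 F1 f1 \<and> cC0 C E2 U2 F2 f2 \<longrightarrow>
        cC0 C (cprod C E1 E2) ((\<lambda>(x, y). cpair C E1 E2 x y) ` (U1 \<times> U2)) (cprod C F1 F2)
          (\<lambda>z. cpair C F1 F2 (f1 (pfst C E1 E2 z)) (f2 (psnd C E1 E2 z)))) \<and>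
     \<comment> \<open>(II.3)\<close>
     (\<forall>E\<in>cM C. cC0 C E (mcarrier E) (cprod C E E) (\<lambda>x. cpair C E E x x)) \<and>
     \<comment> \<open>(II.4)\<close>
     (\<forall>E1\<in>cM C. \<forall>E2\<in>cM C.
        cC0 C (cprod C E1 E2) (mcarrier (cprod C E1 E2)) (cprod C E2 E1)
          (\<lambda>z. cpair C E2 E1 (psnd C E1 E2 z) (pfst C E1 E2 z))) \<and>
     (\<forall>E1\<in>cM C. \<forall>E2\<in>cM C. \<forall>E3\<in>cM C.
        cC0 C (cprod C (cprod C E1 E2) E3) (mcarrier (cprod C (cprod C E1 E2) E3))
          (cprod C E1 (cprod C E2 E3))
          (\<lambda>z. cpair C E1 (cprod C E2 E3)
                 (pfst C E1 E2 (pfst C (cprod C E1 E2) E3 z))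
                 (cpair C E2 E3 (psnd C E1 E2 (pfst C (cprod C E1 E2) E3 z))
                                (psnd C (cprod C E1 E2) E3 z))) \<and>
        cC0 C (cprod C E1 (cprod C E2 E3)) (mcarrier (cprod C E1 (cprod C E2 E3)))
          (cprod C (cprod C E1 E2) E3)
          (\<lambda>z. cpair C (cprod C E1 E2) E3
                 (cpair C E1 E2 (pfst C E1 (cprod C E2 E3) z)
                                (pfst C E2 E3 (psnd C E1 (cprod C E2 E3) z)))
                 (psnd C E2 E3 (psnd C E1 (cprod C E2 E3) z)))) \<and>
     \<comment> \<open>(II.5)\<close>
     (\<forall>E\<in>cM C.
        cC0 C (cprod C E E) (mcarrier (cprod C E E)) E
          (\<lambda>z. madd E (pfst C E E z) (psnd C E E z)) \<and>
        cC0 C (cprod C (cK C) E) (mcarrier (cprod C (cK C) E)) E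
          (\<lambda>z. msmul E (kof C (pfst C (cK C) E z)) (psnd C (cK C) E z)))"

definition ax_III :: "('k::comm_ring_1, 'a) c0data \<Rightarrow> bool" where
  "ax_III C \<longleftrightarrow>
     (\<forall>F\<in>cM C. \<forall>U f g.
        cC0 C (cK C) U F f \<and> cC0 C (cK C) U F g \<and>
        (\<forall>x\<in>U \<inter> cemb C ` kunits. f x = g x) \<longrightarrow> (\<forall>x\<in>U. f x = g x))"

definition c0_concept :: "'k::comm_ring_1 topology \<Rightarrow> ('k, 'a) c0data \<Rightarrow> bool" where
  "c0_concept TK C \<longleftrightarrow>
     c0_structure TK C \<and> c0_maps_ax C \<and> ax_I TK C \<and> ax_II C \<and> ax_III C"

text \<open>U^[1] as a subset of E x (E x K), the triple (x,v,t) being cpair x (cpair v t).\<close>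

definition triple :: "('k, 'a) c0data \<Rightarrow> ('k, 'a) tmod \<Rightarrow> 'a \<Rightarrow> 'a \<Rightarrow> 'k \<Rightarrow> 'a" where
  "triple C E x v t = cpair C E (cprod C E (cK C)) x (cpair C E (cK C) v (cemb C t))"

definition U1 :: "('k::comm_ring_1, 'a) c0data \<Rightarrow> ('k, 'a) tmod \<Rightarrow> 'a set \<Rightarrow> 'a set" where
  "U1 C E U = {triple C E x v t | x v t.
                 x \<in> U \<and> v \<in> mcarrier E \<and> madd E x (msmul E t v) \<in> U}"

definition is_f1 :: "('k::comm_ring_1, 'a) c0data \<Rightarrow> ('k, 'a) tmod \<Rightarrow> 'a set \<Rightarrow> ('k, 'a) tmod
                      \<Rightarrow> ('a \<Rightarrow> 'a) \<Rightarrow> ('a \<Rightarrow> 'a) \<Rightarrow> bool" where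
  "is_f1 C E U F f g \<longleftrightarrow>
     cC0 C (cprod C E (cprod C E (cK C))) (U1 C E U) F g \<and>
     (\<forall>x\<in>U. \<forall>v\<in>mcarrier E. \<forall>t. madd E x (msmul E t v) \<in> U \<longrightarrow>
        msub F (f (madd E x (msmul E t v))) (f x) = msmul F t (g (triple C E x v t)))"

definition is_C1 :: "('k::comm_ring_1, 'a) c0data \<Rightarrow> ('k, 'a) tmod \<Rightarrow> 'a set \<Rightarrow> ('k, 'a) tmod
                      \<Rightarrow> ('a \<Rightarrow> 'a) \<Rightarrow> bool" where
  "is_C1 C E U F f \<longleftrightarrow> cC0 C E U F f \<and> (\<exists>g. is_f1 C E U F f g)"

text \<open>df(x)v = f^[1](x,v,0) (f^[1] is unique on U^[1], so the choice is irrelevant).\<close>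

definition dmap :: "('k::comm_ring_1, 'a) c0data \<Rightarrow> ('k, 'a) tmod \<Rightarrow> 'a set \<Rightarrow> ('k, 'a) tmod
                      \<Rightarrow> ('a \<Rightarrow> 'a) \<Rightarrow> 'a \<Rightarrow> 'a \<Rightarrow> 'a" where
  "dmap C E U F f x v = (SOME g. is_f1 C E U F f g) (triple C E x v 0)"

end

theory Submission
  imports Defs
begin

context
  fixes E :: "('k::comm_ring_1, 'a) tmod"
  assumes tmE: "tmodule E"
begin

lemma tm_zero: "mzero E \<in> mcarrier E" using tmE unfolding tmodule_def by (elim conjE) blast
lemma tm_add: "x \<in> mcarrier E \<Longrightarrow> y \<in> mcarrier E \<Longrightarrow> madd E x y \<in> mcarrier E"
  using tmE unfolding tmodule_def by (elim conjE) blast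
lemma tm_smul: "x \<in> mcarrier E \<Longrightarrow> msmul E r x \<in> mcarrier E"
  using tmE unfolding tmodule_def by (elim conjE) blast
lemma tm_assoc: "x \<in> mcarrier E \<Longrightarrow> y \<in> mcarrier E \<Longrightarrow> z \<in> mcarrier E \<Longrightarrow>
   madd E (madd E x y) z = madd E x (madd E y z)"
  using tmE unfolding tmodule_def by (elim conjE) blast
lemma tm_comm: "x \<in> mcarrier E \<Longrightarrow> y \<in> mcarrier E \<Longrightarrow> madd E x y = madd E y x"
  using tmE unfolding tmodule_def by (elim conjE) blast
lemma tm_lzero: "x \<in> mcarrier E \<Longrightarrow> madd E (mzero E) x = x"
  using tmE unfolding tmodule_def by (elim conjE) blast
lemma tm_neg: "x \<in> mcarrier E \<Longrightarrow> madd E x (msmul E (-1) x) = mzero E"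
  using tmE unfolding tmodule_def by (elim conjE) blast
lemma tm_one: "x \<in> mcarrier E \<Longrightarrow> msmul E 1 x = x"
  using tmE unfolding tmodule_def by (elim conjE) blast
lemma tm_mult: "x \<in> mcarrier E \<Longrightarrow> msmul E (r * s) x = msmul E r (msmul E s x)"
  using tmE unfolding tmodule_def by (elim conjE) blast
lemma tm_distl: "x \<in> mcarrier E \<Longrightarrow> msmul E (r + s) x = madd E (msmul E r x) (msmul E s x)"
  using tmE unfolding tmodule_def by (elim conjE) blast
lemma tm_distr: "x \<in> mcarrier E \<Longrightarrow> y \<in> mcarrier E \<Longrightarrow>
   msmul E r (madd E x y) = madd E (msmul E r x) (msmul E r y)"
proof -
  assume a: "x \<in> mcarrier E" "y \<in> mcarrier E"
  have "\<forall>r. \<forall>x\<in>mcarrier E. \<forall>y\<in>mcarrier E.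
         msmul E r (madd E x y) = madd E (msmul E r x) (msmul E r y)"
    using tmE unfolding tmodule_def by (elim conjE) assumption
  then show ?thesis using a by blast
qed
lemma tm_top: "topspace (mtop E) = mcarrier E"
  using tmE unfolding tmodule_def by (elim conjE) blast

lemma tm_rzero: "x \<in> mcarrier E \<Longrightarrow> madd E x (mzero E) = x"
  using tm_comm tm_lzero tm_zero by metis

lemma tm_smul0: assumes x: "x \<in> mcarrier E" shows "msmul E 0 x = mzero E"
proof -
  let ?y = "msmul E 0 x"
  have y: "?y \<in> mcarrier E" using x tm_smul by blast
  have yy: "madd E ?y ?y = ?y" using tm_distl[OF x, of 0 0] by simp
  have "mzero E = madd E ?y (msmul E (-1) ?y)" using tm_neg[OF y] by simp
  also have "\<dots> = madd E (madd E ?y ?y) (msmul E (-1) ?y)" using yy by simp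
  also have "\<dots> = madd E ?y (madd E ?y (msmul E (-1) ?y))" using tm_assoc y tm_smul by blast
  also have "\<dots> = madd E ?y (mzero E)" using tm_neg[OF y] by simp
  also have "\<dots> = ?y" using tm_rzero y by blast
  finally show ?thesis by simp
qed

lemma tm_sub_trans:
  assumes a: "a \<in> mcarrier E" and b: "b \<in> mcarrier E" and c: "c \<in> mcarrier E"
  shows "madd E (msub E a b) (msub E b c) = msub E a c"
proof -
  have nb: "msmul E (-1) b \<in> mcarrier E" and nc: "msmul E (-1) c \<in> mcarrier E"
    using b c tm_smul by blast+
  have "madd E (msub E a b) (msub E b c)
      = madd E a (madd E (msmul E (-1) b) (madd E b (msmul E (-1) c)))"
    unfolding msub_def using tm_assoc a nb b nc tm_add by simp
  also have "\<dots> = madd E a (madd E (madd E (msmul E (-1) b) b) (msmul E (-1) c))"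
    using tm_assoc nb b nc by simp
  also have "madd E (msmul E (-1) b) b = mzero E"
    using tm_comm[OF nb b] tm_neg[OF b] by simp
  finally show ?thesis unfolding msub_def using tm_lzero nc by simp
qed

lemma tm_cancel:
  assumes "s * t = 1" and p: "p \<in> mcarrier E" and q: "q \<in> mcarrier E"
    and eq: "msmul E t p = msmul E t q"
  shows "p = q"
proof -
  have "p = msmul E (s * t) p" using assms tm_one by simp
  also have "\<dots> = msmul E s (msmul E t q)" using tm_mult p eq by simp
  also have "\<dots> = msmul E (s * t) q" using tm_mult q by simp
  also have "\<dots> = q" using assms tm_one by simp
  finally show ?thesis .
qed

end

context
  fixes TK :: "'k::comm_ring_1 topology" and C :: "('k, 'a) c0data"
  assumes CC: "c0_concept TK C"
begin

lemma c_tm: "E \<in> cM C \<Longrightarrow> tmodule E"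
  using CC unfolding c0_concept_def c0_structure_def by blast
lemma c_K: "cK C \<in> cM C"
  using CC unfolding c0_concept_def c0_structure_def by blast
lemma c_prod: "E1 \<in> cM C \<Longrightarrow> E2 \<in> cM C \<Longrightarrow> cprod C E1 E2 \<in> cM C"
  using CC unfolding c0_concept_def c0_structure_def by blast
lemma c_bij: "E1 \<in> cM C \<Longrightarrow> E2 \<in> cM C \<Longrightarrow>
   bij_betw (\<lambda>(x, y). cpair C E1 E2 x y) (mcarrier E1 \<times> mcarrier E2) (mcarrier (cprod C E1 E2))"
  using CC unfolding c0_concept_def c0_structure_def by blast
lemma c_embbij: "bij_betw (cemb C) UNIV (mcarrier (cK C))"
  using CC unfolding c0_concept_def c0_structure_def by blast
lemma c_emb_in: "cemb C t \<in> mcarrier (cK C)"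
  using c_embbij bij_betwE by blast
lemma c_kof_emb: "kof C (cemb C t) = t"
  unfolding kof_def by (rule inv_into_f_f[OF bij_betw_imp_inj_on[OF c_embbij] UNIV_I])
lemma c_emb_kof: "a \<in> mcarrier (cK C) \<Longrightarrow> cemb C (kof C a) = a"
  unfolding kof_def
  by (rule f_inv_into_f) (simp add: bij_betw_imp_surj_on[OF c_embbij])
lemma c_smulK: "msmul (cK C) r (cemb C s) = cemb C (r * s)"
  using CC unfolding c0_concept_def c0_structure_def by blast

lemma c_pair_in: "E1 \<in> cM C \<Longrightarrow> E2 \<in> cM C \<Longrightarrow> x \<in> mcarrier E1 \<Longrightarrow> y \<in> mcarrier E2 \<Longrightarrow>
   cpair C E1 E2 x y \<in> mcarrier (cprod C E1 E2)"
  using bij_betwE[OF c_bij[of E1 E2]] by (metis (no_types, lifting) SigmaI case_prod_conv)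

lemma c_pair_inj:
  assumes "E1 \<in> cM C" "E2 \<in> cM C" "x \<in> mcarrier E1" "y \<in> mcarrier E2"
    "x' \<in> mcarrier E1" "y' \<in> mcarrier E2" "cpair C E1 E2 x y = cpair C E1 E2 x' y'"
  shows "x = x' \<and> y = y'"
proof -
  have "inj_on (\<lambda>(x, y). cpair C E1 E2 x y) (mcarrier E1 \<times> mcarrier E2)"
    using c_bij[OF assms(1,2)] bij_betw_imp_inj_on by blast
  moreover have "(\<lambda>(x, y). cpair C E1 E2 x y) (x, y) = (\<lambda>(x, y). cpair C E1 E2 x y) (x', y')"
    using assms(7) by simp
  ultimately have "(x, y) = (x', y')" using assms(3-6) by (blast dest: inj_onD)
  then show ?thesis by simp
qed

lemma c_pfst:
  assumes "E1 \<in> cM C" "E2 \<in> cM C" "x \<in> mcarrier E1" "y \<in> mcarrier E2"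
  shows "pfst C E1 E2 (cpair C E1 E2 x y) = x"
  unfolding pfst_def
proof (rule the_equality)
  show "x \<in> mcarrier E1 \<and> (\<exists>y'\<in>mcarrier E2. cpair C E1 E2 x y = cpair C E1 E2 x y')"
    using assms by blast
next
  fix x' assume "x' \<in> mcarrier E1 \<and> (\<exists>y'\<in>mcarrier E2. cpair C E1 E2 x y = cpair C E1 E2 x' y')"
  then obtain y' where "x' \<in> mcarrier E1" "y' \<in> mcarrier E2" "cpair C E1 E2 x y = cpair C E1 E2 x' y'"
    by blast
  then show "x' = x" using c_pair_inj[OF assms(1,2,3,4)] by blast
qed

lemma c_psnd:
  assumes "E1 \<in> cM C" "E2 \<in> cM C" "x \<in> mcarrier E1" "y \<in> mcarrier E2"
  shows "psnd C E1 E2 (cpair C E1 E2 x y) = y"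
  unfolding psnd_def
proof (rule the_equality)
  show "y \<in> mcarrier E2 \<and> (\<exists>x'\<in>mcarrier E1. cpair C E1 E2 x y = cpair C E1 E2 x' y)"
    using assms by blast
next
  fix y' assume "y' \<in> mcarrier E2 \<and> (\<exists>x'\<in>mcarrier E1. cpair C E1 E2 x y = cpair C E1 E2 x' y')"
  then obtain x' where "x' \<in> mcarrier E1" "y' \<in> mcarrier E2" "cpair C E1 E2 x y = cpair C E1 E2 x' y'"
    by blast
  then show "y' = y" using c_pair_inj[OF assms(1,2,3,4)] by blast
qed

lemma c_maps: "c0_maps_ax C" using CC unfolding c0_concept_def by simp
lemma c_I: "ax_I TK C" using CC unfolding c0_concept_def by simp
lemma c_II: "ax_II C" using CC unfolding c0_concept_def by simp
lemma c_IIIax: "ax_III C" using CC unfolding c0_concept_def by simp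

lemma c_c0: "E \<in> cM C \<Longrightarrow> F \<in> cM C \<Longrightarrow> cC0 C E U F f \<Longrightarrow>
   openin (mtop E) U \<and> f ` U \<subseteq> mcarrier F \<and> continuous_map (subtopology (mtop E) U) (mtop F) f"
  using c_maps[unfolded c0_maps_ax_def, THEN conjunct1] by blast
lemma c_cong: "E \<in> cM C \<Longrightarrow> F \<in> cM C \<Longrightarrow> cC0 C E U F f \<Longrightarrow> (\<And>x. x \<in> U \<Longrightarrow> f x = g x) \<Longrightarrow>
   cC0 C E U F g"
  using c_maps[unfolded c0_maps_ax_def, THEN conjunct2] by blast
lemma c_comp: "E \<in> cM C \<Longrightarrow> F \<in> cM C \<Longrightarrow> G \<in> cM C \<Longrightarrow> cC0 C E U F f \<Longrightarrow> cC0 C F V G g \<Longrightarrow>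
   f ` U \<subseteq> V \<Longrightarrow> cC0 C E U G (g \<circ> f)"
  using c_I[unfolded ax_I_def, THEN conjunct1] by blast
lemma c_restr: "E \<in> cM C \<Longrightarrow> F \<in> cM C \<Longrightarrow> cC0 C E U F f \<Longrightarrow> openin (mtop E) V \<Longrightarrow> V \<subseteq> U \<Longrightarrow>
   cC0 C E V F f"
  using c_I[unfolded ax_I_def, THEN conjunct2, THEN conjunct2, THEN conjunct1] by blast
lemma c_affine: "E \<in> cM C \<Longrightarrow> b \<in> mcarrier E \<Longrightarrow>
   cC0 C E (mcarrier E) E (\<lambda>x. madd E (msmul E r x) b)"
  using c_I[unfolded ax_I_def, THEN conjunct2, THEN conjunct2, THEN conjunct2, THEN conjunct1] by blast
lemma c_line: "E \<in> cM C \<Longrightarrow> v \<in> mcarrier E \<Longrightarrow> x \<in> mcarrier E \<Longrightarrow>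
   cC0 C (cK C) (mcarrier (cK C)) E (\<lambda>t. madd E (msmul E (kof C t) v) x)"
  using c_I[unfolded ax_I_def, THEN conjunct2, THEN conjunct2, THEN conjunct2, THEN conjunct2, THEN conjunct1] by blast
lemma c_II1: "E1 \<in> cM C \<Longrightarrow> E2 \<in> cM C \<Longrightarrow>
        cC0 C (cprod C E1 E2) (mcarrier (cprod C E1 E2)) E1 (pfst C E1 E2) \<and>
        cC0 C (cprod C E1 E2) (mcarrier (cprod C E1 E2)) E2 (psnd C E1 E2) \<and>
        (\<forall>y\<in>mcarrier E2. cC0 C E1 (mcarrier E1) (cprod C E1 E2) (\<lambda>v. cpair C E1 E2 v y)) \<and>
        (\<forall>x\<in>mcarrier E1. cC0 C E2 (mcarrier E2) (cprod C E1 E2) (\<lambda>w. cpair C E1 E2 x w))"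
  using c_II[unfolded ax_II_def, THEN conjunct1] by blast
lemma c_slot2: "E1 \<in> cM C \<Longrightarrow> E2 \<in> cM C \<Longrightarrow> x \<in> mcarrier E1 \<Longrightarrow>
   cC0 C E2 (mcarrier E2) (cprod C E1 E2) (\<lambda>w. cpair C E1 E2 x w)"
  using c_II1[THEN conjunct2, THEN conjunct2, THEN conjunct2] by blast
lemma c_slot1: "E1 \<in> cM C \<Longrightarrow> E2 \<in> cM C \<Longrightarrow> y \<in> mcarrier E2 \<Longrightarrow>
   cC0 C E1 (mcarrier E1) (cprod C E1 E2) (\<lambda>v. cpair C E1 E2 v y)"
  using c_II1[THEN conjunct2, THEN conjunct2, THEN conjunct1] by blast
lemma c_prodmap: "E1 \<in> cM C \<Longrightarrow> E2 \<in> cM C \<Longrightarrow> F1 \<in> cM C \<Longrightarrow> F2 \<in> cM C \<Longrightarrow>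
   cC0 C E1 A1 F1 f1 \<Longrightarrow> cC0 C E2 A2 F2 f2 \<Longrightarrow>
   cC0 C (cprod C E1 E2) ((\<lambda>(x, y). cpair C E1 E2 x y) ` (A1 \<times> A2)) (cprod C F1 F2)
          (\<lambda>z. cpair C F1 F2 (f1 (pfst C E1 E2 z)) (f2 (psnd C E1 E2 z)))"
  using c_II[unfolded ax_II_def, THEN conjunct2, THEN conjunct1] by blast
lemma c_diag: "E \<in> cM C \<Longrightarrow> cC0 C E (mcarrier E) (cprod C E E) (\<lambda>x. cpair C E E x x)"
  using c_II[unfolded ax_II_def, THEN conjunct2, THEN conjunct2, THEN conjunct1] by blast
lemma c_II5: "E \<in> cM C \<Longrightarrow> cC0 C (cprod C E E) (mcarrier (cprod C E E)) E
          (\<lambda>z. madd E (pfst C E E z) (psnd C E E z)) \<and>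
        cC0 C (cprod C (cK C) E) (mcarrier (cprod C (cK C) E)) E
          (\<lambda>z. msmul E (kof C (pfst C (cK C) E z)) (psnd C (cK C) E z))"
  using c_II[unfolded ax_II_def, THEN conjunct2, THEN conjunct2, THEN conjunct2, THEN conjunct2, THEN conjunct2] by blast
lemma c_addmap: "E \<in> cM C \<Longrightarrow> cC0 C (cprod C E E) (mcarrier (cprod C E E)) E
          (\<lambda>z. madd E (pfst C E E z) (psnd C E E z))"
  using c_II5 by blast
lemma c_III: "F \<in> cM C \<Longrightarrow> cC0 C (cK C) U F f \<Longrightarrow> cC0 C (cK C) U F g \<Longrightarrow>
   (\<And>x. x \<in> U \<inter> cemb C ` kunits \<Longrightarrow> f x = g x) \<Longrightarrow> x \<in> U \<Longrightarrow> f x = g x"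
  using c_IIIax[unfolded ax_III_def] by blast

end

context
  fixes TK :: "'k::comm_ring_1 topology" and C :: "('k, 'a) c0data"
  assumes CC: "c0_concept TK C"
begin

lemma c_pairing:
  assumes G: "G \<in> cM C" and E1: "E1 \<in> cM C" and E2: "E2 \<in> cM C"
    and f: "cC0 C G A E1 \<phi>" and g: "cC0 C G A E2 \<psi>"
  shows "cC0 C G A (cprod C E1 E2) (\<lambda>a. cpair C E1 E2 (\<phi> a) (\<psi> a))"
proof -
  have GG: "cprod C G G \<in> cM C" using c_prod[OF CC] G by blast
  have E12: "cprod C E1 E2 \<in> cM C" using c_prod[OF CC] E1 E2 by blast
  have oA: "openin (mtop G) A" using c_c0[OF CC G E1 f] by blast
  have AG: "A \<subseteq> mcarrier G" using openin_subset[OF oA] tm_top[OF c_tm[OF CC G]] by simp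
  have d: "cC0 C G A (cprod C G G) (\<lambda>x. cpair C G G x x)"
    using c_restr[OF CC G GG c_diag[OF CC G] oA AG] .
  have p: "cC0 C (cprod C G G) ((\<lambda>(x, y). cpair C G G x y) ` (A \<times> A)) (cprod C E1 E2)
          (\<lambda>z. cpair C E1 E2 (\<phi> (pfst C G G z)) (\<psi> (psnd C G G z)))"
    using c_prodmap[OF CC G G E1 E2 f g] .
  have "cC0 C G A (cprod C E1 E2)
     ((\<lambda>z. cpair C E1 E2 (\<phi> (pfst C G G z)) (\<psi> (psnd C G G z))) \<circ> (\<lambda>x. cpair C G G x x))"
    by (rule c_comp[OF CC G GG E12 d p]) force
  then show ?thesis
  proof (rule c_cong[OF CC G E12])
    fix a assume "a \<in> A"
    then have "a \<in> mcarrier G" using AG by blast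
    then show "((\<lambda>z. cpair C E1 E2 (\<phi> (pfst C G G z)) (\<psi> (psnd C G G z))) \<circ> (\<lambda>x. cpair C G G x x)) a
       = cpair C E1 E2 (\<phi> a) (\<psi> a)"
      by (simp add: c_pfst[OF CC G G] c_psnd[OF CC G G])
  qed
qed

lemma c_sum:
  assumes G: "G \<in> cM C" and F: "F \<in> cM C"
    and f: "cC0 C G A F \<phi>" and g: "cC0 C G A F \<psi>"
  shows "cC0 C G A F (\<lambda>a. madd F (\<phi> a) (\<psi> a))"
proof -
  have FF: "cprod C F F \<in> cM C" using c_prod[OF CC] F by blast
  have pr: "cC0 C G A (cprod C F F) (\<lambda>a. cpair C F F (\<phi> a) (\<psi> a))"
    by (rule c_pairing[OF G F F f g])
  have im: "(\<lambda>a. cpair C F F (\<phi> a) (\<psi> a)) ` A \<subseteq> mcarrier (cprod C F F)"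
    by (rule conjunct1[OF conjunct2[OF c_c0[OF CC G FF pr]]])
  have "cC0 C G A F ((\<lambda>z. madd F (pfst C F F z) (psnd C F F z)) \<circ> (\<lambda>a. cpair C F F (\<phi> a) (\<psi> a)))"
    by (rule c_comp[OF CC G FF F pr c_addmap[OF CC F] im])
  then show ?thesis
  proof (rule c_cong[OF CC G F])
    fix a assume "a \<in> A"
    have i1: "\<phi> ` A \<subseteq> mcarrier F" by (rule conjunct1[OF conjunct2[OF c_c0[OF CC G F f]]])
    have i2: "\<psi> ` A \<subseteq> mcarrier F" by (rule conjunct1[OF conjunct2[OF c_c0[OF CC G F g]]])
    from \<open>a \<in> A\<close> i1 i2 have "\<phi> a \<in> mcarrier F" "\<psi> a \<in> mcarrier F" by auto
    then show "((\<lambda>z. madd F (pfst C F F z) (psnd C F F z)) \<circ> (\<lambda>a. cpair C F F (\<phi> a) (\<psi> a))) a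
       = madd F (\<phi> a) (\<psi> a)"
      by (simp add: c_pfst[OF CC F F] c_psnd[OF CC F F])
  qed
qed

lemma c_smul:
  assumes G: "G \<in> cM C" and F: "F \<in> cM C" and f: "cC0 C G A F \<phi>"
  shows "cC0 C G A F (\<lambda>a. msmul F r (\<phi> a))"
proof -
  have tF: "tmodule F" using c_tm[OF CC F] .
  have im: "\<phi> ` A \<subseteq> mcarrier F" by (rule conjunct1[OF conjunct2[OF c_c0[OF CC G F f]]])
  have "cC0 C G A F ((\<lambda>x. madd F (msmul F r x) (mzero F)) \<circ> \<phi>)"
    by (rule c_comp[OF CC G F F f c_affine[OF CC F tm_zero[OF tF]] im])
  then show ?thesis
  proof (rule c_cong[OF CC G F])
    fix a assume "a \<in> A"
    then have "\<phi> a \<in> mcarrier F" using im by blast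
    then show "((\<lambda>x. madd F (msmul F r x) (mzero F)) \<circ> \<phi>) a = msmul F r (\<phi> a)"
      using tm_rzero[OF tF] tm_smul[OF tF] by simp
  qed
qed

lemma c_slotK:
  assumes E: "E \<in> cM C" and y: "y \<in> mcarrier E" and v: "v \<in> mcarrier E"
  shows "cC0 C (cK C) (mcarrier (cK C)) (cprod C E (cprod C E (cK C)))
           (\<lambda>a. cpair C E (cprod C E (cK C)) y (cpair C E (cK C) v a))"
proof -
  have K: "cK C \<in> cM C" by (rule c_K[OF CC])
  have P: "cprod C E (cK C) \<in> cM C" using c_prod[OF CC E K] .
  have Q: "cprod C E (cprod C E (cK C)) \<in> cM C" using c_prod[OF CC E P] .
  have s1: "cC0 C (cK C) (mcarrier (cK C)) (cprod C E (cK C)) (\<lambda>a. cpair C E (cK C) v a)"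
    using c_slot2[OF CC E K v] .
  have s2: "cC0 C (cprod C E (cK C)) (mcarrier (cprod C E (cK C))) (cprod C E (cprod C E (cK C)))
       (\<lambda>w. cpair C E (cprod C E (cK C)) y w)"
    using c_slot2[OF CC E P y] .
  have im: "(\<lambda>a. cpair C E (cK C) v a) ` mcarrier (cK C) \<subseteq> mcarrier (cprod C E (cK C))"
    by (rule conjunct1[OF conjunct2[OF c_c0[OF CC K P s1]]])
  show ?thesis using c_comp[OF CC K P Q s1 s2 im] by (simp add: comp_def)
qed

end

theorem proposition2p2:
  fixes TK :: "'k::comm_ring_1 topology"
    and C :: "('k, 'a) c0data"
  assumes "c0_concept TK C"
    and "E \<in> cM C" and "F \<in> cM C"
    and "openin (mtop E) U"
    and "is_C1 C E U F f"
    and "x \<in> U"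
  shows "(\<forall>v\<in>mcarrier E. \<forall>w\<in>mcarrier E.
            dmap C E U F f x (madd E v w) = madd F (dmap C E U F f x v) (dmap C E U F f x w)) \<and>
         (\<forall>r. \<forall>v\<in>mcarrier E. dmap C E U F f x (msmul E r v) = msmul F r (dmap C E U F f x v)) \<and>
         cC0 C E (mcarrier E) F (dmap C E U F f x)"
proof -
  note CC = assms(1)
  have E: "E \<in> cM C" and F: "F \<in> cM C" using assms by auto
  have K: "cK C \<in> cM C" by (rule c_K[OF CC])
  have P: "cprod C E (cK C) \<in> cM C" using c_prod[OF CC E K] .
  have Q: "cprod C E (cprod C E (cK C)) \<in> cM C" using c_prod[OF CC E P] .
  have tE: "tmodule E" and tF: "tmodule F" and tK: "tmodule (cK C)"
    using c_tm[OF CC] E F K by auto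
  define g0 where "g0 = (SOME g. is_f1 C E U F f g)"
  have "\<exists>g. is_f1 C E U F f g" using assms(5) unfolding is_C1_def by blast
  then have f1: "is_f1 C E U F f g0" unfolding g0_def by (rule someI_ex)
  have g0C: "cC0 C (cprod C E (cprod C E (cK C))) (U1 C E U) F g0"
    using f1 unfolding is_f1_def by blast
  have g0eq: "msub F (f (madd E y (msmul E t v))) (f y) = msmul F t (g0 (triple C E y v t))"
    if "y \<in> U" "v \<in> mcarrier E" "madd E y (msmul E t v) \<in> U" for y v t
    using f1 that unfolding is_f1_def by blast
  have dm: "dmap C E U F f x v = g0 (triple C E x v 0)" for v
    unfolding dmap_def g0_def by simp
  have UE: "U \<subseteq> mcarrier E" using openin_subset[OF assms(4)] tm_top[OF tE] by simp
  have xE: "x \<in> mcarrier E" using assms(6) UE by blast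
  have inU1: "triple C E y v t \<in> U1 C E U"
    if "y \<in> U" "v \<in> mcarrier E" "madd E y (msmul E t v) \<in> U" for y v t
    unfolding U1_def using that by blast
  have fF: "f y \<in> mcarrier F" if "y \<in> U" for y
    using conjunct1[OF conjunct2[OF c_c0[OF CC E F conjunct1[OF assms(5)[unfolded is_C1_def]]]]] that
    by blast
  have g0F: "g0 z \<in> mcarrier F" if "z \<in> U1 C E U" for z
    using conjunct1[OF conjunct2[OF c_c0[OF CC Q F g0C]]] that by blast
  have x0: "madd E x (msmul E 0 v) = x" if "v \<in> mcarrier E" for v
    using tm_smul0[OF tE that] tm_rzero[OF tE xE] by simp
  have kofa: "cemb C (kof C a) = a" if "a \<in> mcarrier (cK C)" for a
    by (rule c_emb_kof[OF CC that])
  have k0: "kof C (cemb C 0) = 0" by (rule c_kof_emb[OF CC])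
  have trip: "triple C E y v (kof C a) = cpair C E (cprod C E (cK C)) y (cpair C E (cK C) v a)"
    if "a \<in> mcarrier (cK C)" for y v a
    unfolding triple_def using kofa[OF that] by simp
  have trip': "triple C E y v t = cpair C E (cprod C E (cK C)) y (cpair C E (cK C) v (cemb C t))"
    for y v t unfolding triple_def by simp

  have Dg: "cC0 C (cK C) W F (\<lambda>a. g0 (cpair C E (cprod C E (cK C)) y (cpair C E (cK C) v a)))"
    if y: "y \<in> U" and v: "v \<in> mcarrier E" and W: "openin (mtop (cK C)) W"
       and WS: "W \<subseteq> {a \<in> mcarrier (cK C). madd E y (msmul E (kof C a) v) \<in> U}" for y v W
  proof -
    have yE: "y \<in> mcarrier E" using y UE by blast
    have T: "cC0 C (cK C) W (cprod C E (cprod C E (cK C)))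
        (\<lambda>a. cpair C E (cprod C E (cK C)) y (cpair C E (cK C) v a))"
      using c_restr[OF CC K Q c_slotK[OF CC E yE v] W] WS by blast
    have "cC0 C (cK C) W F (g0 \<circ> (\<lambda>a. cpair C E (cprod C E (cK C)) y (cpair C E (cK C) v a)))"
    proof (rule c_comp[OF CC K Q F T g0C], rule image_subsetI)
      fix a assume "a \<in> W"
      then have a: "a \<in> mcarrier (cK C)" "madd E y (msmul E (kof C a) v) \<in> U" using WS by auto
      have "triple C E y v (kof C a) \<in> U1 C E U" by (rule inU1[OF y v a(2)])
      then show "cpair C E (cprod C E (cK C)) y (cpair C E (cK C) v a) \<in> U1 C E U"
        using trip[OF a(1)] by simp
    qed
    then show ?thesis by (simp add: comp_def)
  qed

  have openpre: "openin (mtop (cK C)) {a \<in> mcarrier (cK C). madd E x (msmul E (kof C a) u) \<in> U}"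
    if u: "u \<in> mcarrier E" for u
  proof -
    have "continuous_map (subtopology (mtop (cK C)) (mcarrier (cK C))) (mtop E)
          (\<lambda>t. madd E (msmul E (kof C t) u) x)"
      using c_c0[OF CC K E c_line[OF CC E u xE]] by blast
    then have "continuous_map (mtop (cK C)) (mtop E) (\<lambda>t. madd E (msmul E (kof C t) u) x)"
      using tm_top[OF tK] by (metis subtopology_topspace)
    then have "openin (mtop (cK C)) {a \<in> topspace (mtop (cK C)). madd E (msmul E (kof C a) u) x \<in> U}"
      using openin_continuous_map_preimage assms(4) by blast
    moreover have "{a \<in> topspace (mtop (cK C)). madd E (msmul E (kof C a) u) x \<in> U}
       = {a \<in> mcarrier (cK C). madd E x (msmul E (kof C a) u) \<in> U}"
      using tm_top[OF tK] tm_comm[OF tE] tm_smul[OF tE] xE u by auto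
    ultimately show ?thesis by simp
  qed

  have cont: "cC0 C E (mcarrier E) F (dmap C E U F f x)"
  proof -
    have s1: "cC0 C E (mcarrier E) (cprod C E (cK C)) (\<lambda>v. cpair C E (cK C) v (cemb C 0))"
      using c_slot1[OF CC E K c_emb_in[OF CC]] .
    have s2: "cC0 C (cprod C E (cK C)) (mcarrier (cprod C E (cK C))) (cprod C E (cprod C E (cK C)))
       (\<lambda>w. cpair C E (cprod C E (cK C)) x w)"
      using c_slot2[OF CC E P xE] .
    have im: "(\<lambda>v. cpair C E (cK C) v (cemb C 0)) ` mcarrier E \<subseteq> mcarrier (cprod C E (cK C))"
      by (rule conjunct1[OF conjunct2[OF c_c0[OF CC E P s1]]])
    have s3: "cC0 C E (mcarrier E) (cprod C E (cprod C E (cK C)))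
       ((\<lambda>w. cpair C E (cprod C E (cK C)) x w) \<circ> (\<lambda>v. cpair C E (cK C) v (cemb C 0)))"
      by (rule c_comp[OF CC E P Q s1 s2 im])
    have "cC0 C E (mcarrier E) F (g0 \<circ> ((\<lambda>w. cpair C E (cprod C E (cK C)) x w) \<circ> (\<lambda>v. cpair C E (cK C) v (cemb C 0))))"
    proof (rule c_comp[OF CC E Q F s3 g0C], rule image_subsetI)
      fix v assume v: "v \<in> mcarrier E"
      have "triple C E x v 0 \<in> U1 C E U" using inU1[OF assms(6) v] x0[OF v] assms(6) by simp
      then show "((\<lambda>w. cpair C E (cprod C E (cK C)) x w) \<circ> (\<lambda>v. cpair C E (cK C) v (cemb C 0))) v \<in> U1 C E U"
        by (simp add: trip')
    qed
    then show ?thesis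
      by (rule c_cong[OF CC E F]) (simp add: dm trip')
  qed

  have add: "dmap C E U F f x (madd E v w) = madd F (dmap C E U F f x v) (dmap C E U F f x w)"
    if v: "v \<in> mcarrier E" and w: "w \<in> mcarrier E" for v w
  proof -
    have vw: "madd E v w \<in> mcarrier E" using tm_add[OF tE v w] .
    define D where "D = {a \<in> mcarrier (cK C). madd E x (msmul E (kof C a) v) \<in> U}
       \<inter> {a \<in> mcarrier (cK C). madd E x (msmul E (kof C a) (madd E v w)) \<in> U}"
    have oD: "openin (mtop (cK C)) D" unfolding D_def
      using openpre[OF v] openpre[OF vw] by (rule openin_Int)
    have alg: "madd E (madd E x (msmul E t v)) (msmul E t w) = madd E x (msmul E t (madd E v w))" for t
      using tm_assoc[OF tE xE tm_smul[OF tE v] tm_smul[OF tE w]] tm_distr[OF tE v w] by simp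
    let ?L = "\<lambda>a. g0 (cpair C E (cprod C E (cK C)) x (cpair C E (cK C) (madd E v w) a))"
    let ?R1 = "\<lambda>a. g0 (cpair C E (cprod C E (cK C)) x (cpair C E (cK C) v a))"
    let ?R2 = "\<lambda>a. g0 (cpair C E (cprod C E (cK C)) (madd E x (msmul E (kof C a) v)) (cpair C E (cK C) w a))"
    have cL: "cC0 C (cK C) D F ?L" by (rule Dg[OF assms(6) vw oD]) (auto simp: D_def)
    have cR1: "cC0 C (cK C) D F ?R1" by (rule Dg[OF assms(6) v oD]) (auto simp: D_def)
    have DK: "D \<subseteq> mcarrier (cK C)" unfolding D_def by blast
    have phi: "cC0 C (cK C) D E (\<lambda>a. madd E x (msmul E (kof C a) v))"
    proof -
      have "cC0 C (cK C) (mcarrier (cK C)) E (\<lambda>a. madd E x (msmul E (kof C a) v))"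
        by (rule c_cong[OF CC K E c_line[OF CC E v xE]])
           (use tm_comm[OF tE] tm_smul[OF tE v] xE in auto)
      then show ?thesis by (rule c_restr[OF CC K E _ oD DK])
    qed
    have psi: "cC0 C (cK C) D (cprod C E (cK C)) (\<lambda>a. cpair C E (cK C) w a)"
      by (rule c_restr[OF CC K P c_slot2[OF CC E K w] oD DK])
    have pr: "cC0 C (cK C) D (cprod C E (cprod C E (cK C)))
      (\<lambda>a. cpair C E (cprod C E (cK C)) (madd E x (msmul E (kof C a) v)) (cpair C E (cK C) w a))"
      by (rule c_pairing[OF CC K E P phi psi])
    have "cC0 C (cK C) D F (g0 \<circ> (\<lambda>a. cpair C E (cprod C E (cK C)) (madd E x (msmul E (kof C a) v)) (cpair C E (cK C) w a)))"
    proof (rule c_comp[OF CC K Q F pr g0C], rule image_subsetI)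
      fix a assume "a \<in> D"
      then have a: "a \<in> mcarrier (cK C)" "madd E x (msmul E (kof C a) v) \<in> U"
        "madd E x (msmul E (kof C a) (madd E v w)) \<in> U" unfolding D_def by auto
      have "triple C E (madd E x (msmul E (kof C a) v)) w (kof C a) \<in> U1 C E U"
        using inU1[OF a(2) w] alg a(3) by simp
      then show "cpair C E (cprod C E (cK C)) (madd E x (msmul E (kof C a) v)) (cpair C E (cK C) w a) \<in> U1 C E U"
        using trip[OF a(1)] by simp
    qed
    then have cR2: "cC0 C (cK C) D F ?R2" by (simp add: comp_def)
    have cR: "cC0 C (cK C) D F (\<lambda>a. madd F (?R1 a) (?R2 a))"
      by (rule c_sum[OF CC K F cR1 cR2])
    have z: "cemb C 0 \<in> D" unfolding D_def using k0 x0[OF v] x0[OF vw] assms(6) c_emb_in[OF CC] by simp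
    have "?L (cemb C 0) = madd F (?R1 (cemb C 0)) (?R2 (cemb C 0))"
    proof (rule c_III[OF CC F cL cR _ z])
      fix a assume "a \<in> D \<inter> cemb C ` kunits"
      then obtain t where aD: "a \<in> D" and at: "a = cemb C t" and tu: "t \<in> kunits" by blast
      obtain s where ts: "t * s = 1" using tu unfolding kunits_def by blast
      have st: "s * t = 1" using ts by (simp add: mult.commute)
      have kt: "kof C a = t" using at c_kof_emb[OF CC] by simp
      let ?A = "madd E x (msmul E t (madd E v w))"
      let ?B = "madd E x (msmul E t v)"
      have AU: "?A \<in> U" and BU: "?B \<in> U" using aD kt unfolding D_def by auto
      have L: "?L a = g0 (triple C E x (madd E v w) t)" using at trip' by simp
      have R1: "?R1 a = g0 (triple C E x v t)" using at trip' by simp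
      have R2: "?R2 a = g0 (triple C E ?B w t)" using at trip' kt by simp
      have BA: "madd E ?B (msmul E t w) = ?A" by (rule alg)
      have e1: "msub F (f ?A) (f x) = msmul F t (?L a)" using g0eq[OF assms(6) vw AU] L by simp
      have e2: "msub F (f ?B) (f x) = msmul F t (?R1 a)" using g0eq[OF assms(6) v BU] R1 by simp
      have BAU: "madd E ?B (msmul E t w) \<in> U" using BA AU by simp
      have e3: "msub F (f ?A) (f ?B) = msmul F t (?R2 a)"
        using g0eq[OF BU w BAU] unfolding BA R2 .
      have inL: "?L a \<in> mcarrier F" using L g0F inU1[OF assms(6) vw AU] by simp
      have inR1: "?R1 a \<in> mcarrier F" using R1 g0F inU1[OF assms(6) v BU] by simp
      have inR2: "?R2 a \<in> mcarrier F" using R2 g0F inU1[OF BU w] BA AU by simp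
      have "msmul F t (?L a) = madd F (msub F (f ?A) (f ?B)) (msub F (f ?B) (f x))"
        using e1 tm_sub_trans[OF tF fF[OF AU] fF[OF BU] fF[OF assms(6)]] by simp
      also have "\<dots> = madd F (msmul F t (?R2 a)) (msmul F t (?R1 a))" using e2 e3 by simp
      also have "\<dots> = msmul F t (madd F (?R2 a) (?R1 a))" using tm_distr[OF tF inR2 inR1] by simp
      also have "\<dots> = msmul F t (madd F (?R1 a) (?R2 a))" using tm_comm[OF tF inR2 inR1] by simp
      finally show "?L a = madd F (?R1 a) (?R2 a)"
        using tm_cancel[OF tF st inL tm_add[OF tF inR1 inR2]] by blast
    qed
    then show ?thesis using x0[OF v] k0 by (simp add: dm trip')
  qed

  have hom: "dmap C E U F f x (msmul E r v) = msmul F r (dmap C E U F f x v)"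
    if v: "v \<in> mcarrier E" for r v
  proof -
    have rv: "msmul E r v \<in> mcarrier E" using tm_smul[OF tE v] .
    define D where "D = {a \<in> mcarrier (cK C). madd E x (msmul E (kof C a) (msmul E r v)) \<in> U}"
    define W where "W = {a \<in> mcarrier (cK C). madd E x (msmul E (kof C a) v) \<in> U}"
    have oD: "openin (mtop (cK C)) D" unfolding D_def using openpre[OF rv] .
    have oW: "openin (mtop (cK C)) W" unfolding W_def using openpre[OF v] .
    have DK: "D \<subseteq> mcarrier (cK C)" unfolding D_def by blast
    let ?L = "\<lambda>a. g0 (cpair C E (cprod C E (cK C)) x (cpair C E (cK C) (msmul E r v) a))"
    let ?H = "\<lambda>a. g0 (cpair C E (cprod C E (cK C)) x (cpair C E (cK C) v a))"
    let ?R = "\<lambda>a. msmul F r (?H (msmul (cK C) r a))"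
    have cL: "cC0 C (cK C) D F ?L" by (rule Dg[OF assms(6) rv oD]) (auto simp: D_def)
    have cH: "cC0 C (cK C) W F ?H" by (rule Dg[OF assms(6) v oW]) (auto simp: W_def)
    have cM: "cC0 C (cK C) D (cK C) (\<lambda>a. msmul (cK C) r a)"
    proof -
      have "cC0 C (cK C) (mcarrier (cK C)) (cK C) (\<lambda>a. msmul (cK C) r a)"
        by (rule c_cong[OF CC K K c_affine[OF CC K tm_zero[OF tK]]])
           (use tm_rzero[OF tK] tm_smul[OF tK] in auto)
      then show ?thesis by (rule c_restr[OF CC K K _ oD DK])
    qed
    have kr: "kof C (msmul (cK C) r a) = r * kof C a" if "a \<in> mcarrier (cK C)" for a
    proof -
      have "msmul (cK C) r a = cemb C (r * kof C a)"
        using c_smulK[OF CC, of r "kof C a"] kofa[OF that] by simp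
      then show ?thesis using c_kof_emb[OF CC] by simp
    qed
    have alg: "msmul E (r * t) v = msmul E t (msmul E r v)" for t
      using tm_mult[OF tE v, of t r] by (simp add: mult.commute)
    have "cC0 C (cK C) D F (?H \<circ> (\<lambda>a. msmul (cK C) r a))"
    proof (rule c_comp[OF CC K K F cM cH], rule image_subsetI)
      fix a assume "a \<in> D"
      then have a: "a \<in> mcarrier (cK C)" "madd E x (msmul E (kof C a) (msmul E r v)) \<in> U"
        unfolding D_def by auto
      show "msmul (cK C) r a \<in> W" unfolding W_def
        using a kr[OF a(1)] alg tm_smul[OF tK a(1)] by simp
    qed
    then have cH2: "cC0 C (cK C) D F (\<lambda>a. ?H (msmul (cK C) r a))" by (simp add: comp_def)
    have cR: "cC0 C (cK C) D F ?R" by (rule c_smul[OF CC K F cH2])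
    have z: "cemb C 0 \<in> D" unfolding D_def using k0 x0[OF rv] assms(6) c_emb_in[OF CC] by simp
    have "?L (cemb C 0) = ?R (cemb C 0)"
    proof (rule c_III[OF CC F cL cR _ z])
      fix a assume "a \<in> D \<inter> cemb C ` kunits"
      then obtain t where aD: "a \<in> D" and at: "a = cemb C t" and tu: "t \<in> kunits" by blast
      obtain s where ts: "t * s = 1" using tu unfolding kunits_def by blast
      have st: "s * t = 1" using ts by (simp add: mult.commute)
      have kt: "kof C a = t" using at c_kof_emb[OF CC] by simp
      let ?A = "madd E x (msmul E t (msmul E r v))"
      have AU: "?A \<in> U" using aD kt unfolding D_def by auto
      have A': "madd E x (msmul E (r * t) v) = ?A" using alg by simp
      have L: "?L a = g0 (triple C E x (msmul E r v) t)" using at trip' by simp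
      have H: "?H (msmul (cK C) r a) = g0 (triple C E x v (r * t))"
        using at trip' c_smulK[OF CC] by simp
      have inL: "?L a \<in> mcarrier F" using L g0F inU1[OF assms(6) rv AU] by simp
      have AU': "madd E x (msmul E (r * t) v) \<in> U" using A' AU by simp
      have inH: "?H (msmul (cK C) r a) \<in> mcarrier F" using H g0F inU1[OF assms(6) v AU'] by simp
      have inR: "?R a \<in> mcarrier F" using tm_smul[OF tF inH] .
      have "msmul F t (?L a) = msub F (f ?A) (f x)" using g0eq[OF assms(6) rv AU] L by simp
      also have "\<dots> = msmul F (r * t) (?H (msmul (cK C) r a))"
        using g0eq[OF assms(6) v AU'] A' H by simp
      also have "\<dots> = msmul F t (?R a)"
        using tm_mult[OF tF inH, of t r] by (simp add: mult.commute)
      finally show "?L a = ?R a" using tm_cancel[OF tF st inL inR] by blast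
    qed
    then show ?thesis using c_smulK[OF CC] by (simp add: dm trip')
  qed

  show ?thesis using add hom cont by blast
qed

end
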